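(* Let $S$ be a set of primes, and for $z>e$ let $S_z=\{p\in S: p\le z\}$. Let $\beta$ and $C$ be real constants and suppose $z>e$ satisfies $\sum_{p\in S_z}1/p\leq \beta\log\log z + C$. Let $N_z$ be the set of all positive integers all of whose prime factors lie in $S_z$. Let $\eta\ge 1$. Then \[ \sum_{\substack{n\in N_z\\ \omega(n)\ge \eta\beta\log\log z}}\frac{1}{n} \ll_{C,\eta} (\log z)^{\beta(\eta-\eta\log\eta)}, \] where the implied constant depends only on $C$ and $\eta$.
   Context: $\omega(n)$ is the number of distinct prime divisors of $n$. *)

theory Defs
  imports "HOL-Analysis.Analysis" "HOL-Computational_Algebra.Primes"
begin

definition omega :: "nat \<Rightarrow> nat" where
  "omega n = card (prime_factors n)"

definition S_le :: "nat set \<Rightarrow> real \<Rightarrow> nat set" where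
  "S_le S z = {p \<in> S. real p \<le> z}"

definition N_le :: "nat set \<Rightarrow> real \<Rightarrow> nat set" where
  "N_le S z = {n. n > 0 \<and> prime_factors n \<subseteq> S_le S z}"

end

theory Submission
  imports Defs
begin

lemma omega_pk:
  assumes p: "prime (p::nat)" and m: "m > 0" "\<not> p dvd m"
  shows "omega (p^k * m) = omega m + (if k > 0 then 1 else 0)"
    and "prime_factors m \<subseteq> prime_factors (p^k*m) - {p}"
proof -
  have eq: "prime_factors (p^k * m) = (if k > 0 then {p} else {}) \<union> prime_factors m"
  proof (intro set_eqI iffI)
    fix q assume "q \<in> prime_factors (p^k * m)"
    then have q: "prime q" "q dvd p^k * m" by (auto simp: in_prime_factors_iff)
    then have "q dvd p^k \<or> q dvd m" by (simp add: prime_dvd_mult_iff)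
    then show "q \<in> (if k > 0 then {p} else {}) \<union> prime_factors m"
    proof
      assume "q dvd p^k"
      then have "q dvd p" "k > 0" using q prime_dvd_power[of q p k] by (auto intro: Nat.gr0I)
      then have "q = p" using q p primes_dvd_imp_eq by blast
      then show ?thesis using \<open>k>0\<close> by simp
    qed (use q m in \<open>auto simp: in_prime_factors_iff\<close>)
  next
    fix q assume "q \<in> (if k > 0 then {p} else {}) \<union> prime_factors m"
    then show "q \<in> prime_factors (p^k * m)"
      using p m by (cases "k > 0") (auto simp: in_prime_factors_iff)
  qed
  have "p \<notin> prime_factors m" using m by (auto simp: in_prime_factors_iff)
  then show "omega (p^k * m) = omega m + (if k > 0 then 1 else 0)"
    unfolding omega_def eq by auto
  show "prime_factors m \<subseteq> prime_factors (p^k*m) - {p}"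
    using eq \<open>p \<notin> prime_factors m\<close> by auto
qed

lemma geom_bound:
  fixes t :: real and p :: nat assumes "t \<ge> 0" "p \<ge> 2"
  shows "(\<Sum>k\<le>K. (if k > 0 then t else 1) / real p ^ k) \<le> 1 + t / (real p - 1)"
proof -
  let ?x = "1 / real p"
  have "(\<Sum>k\<le>K. (if k > 0 then t else 1) / real p ^ k) = 1 + t * (\<Sum>k<K. ?x ^ Suc k)"
  proof (induction K)
    case 0 then show ?case by simp
  next
    case (Suc K)
    then show ?case by (simp add: power_divide algebra_simps)
  qed
  also have "(\<Sum>k<K. ?x ^ Suc k) \<le> 1 / (real p - 1)"
  proof -
    have x: "?x < 1" "?x \<ge> 0" using assms by auto
    have "(\<Sum>k<K. ?x ^ k) = (1 - ?x^K) / (1 - ?x)"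
      using x by (subst sum_gp_strict) auto
    also have "\<dots> \<le> 1 / (1 - ?x)" using x by (intro divide_right_mono) auto
    finally have b: "(\<Sum>k<K. ?x ^ k) \<le> 1 / (1 - ?x)" .
    have "(\<Sum>k<K. ?x ^ Suc k) = ?x * (\<Sum>k<K. ?x ^ k)"
      by (simp add: sum_distrib_left)
    also have "\<dots> \<le> ?x * (1 / (1 - ?x))"
      using x b by (intro mult_left_mono) auto
    also have "\<dots> = 1 / (real p - 1)" using assms by (simp add: field_simps)
    finally show ?thesis .
  qed
  finally show ?thesis using assms by (simp add: mult_left_mono)
qed

lemma key:
  fixes t :: real assumes t: "t \<ge> 0"
  shows "finite P \<Longrightarrow> (\<forall>p\<in>P. prime p) \<Longrightarrow> finite F \<Longrightarrow>
     (\<forall>n\<in>F. n > 0 \<and> prime_factors n \<subseteq> P) \<Longrightarrow>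
     (\<Sum>n\<in>F. t ^ omega n / real n) \<le> (\<Prod>p\<in>P. 1 + t / (real p - 1))"
proof (induction P arbitrary: F rule: finite_induct)
  case empty
  have "F \<subseteq> {1}"
  proof
    fix n assume n: "n \<in> F"
    show "n \<in> {1}"
    proof (rule ccontr)
      assume "n \<notin> {1}"
      then obtain q where "prime q" "q dvd n" using prime_factor_nat[of n] by auto
      moreover have "n > 0" using empty n by blast
      ultimately have "q \<in> prime_factors n" by (auto simp: in_prime_factors_iff)
      moreover have "prime_factors n \<subseteq> {}" using empty n by blast
      ultimately show False by blast
    qed
  qed
  then have "(\<Sum>n\<in>F. t ^ omega n / real n) \<le> (\<Sum>n\<in>{1}. t ^ omega n / real n)"
    using t by (intro sum_mono2) auto
  also have "\<dots> = 1" by (simp add: omega_def)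
  finally show ?case by simp
next
  case (insert p P)
  have p: "prime p" using insert by auto
  define k where "k n = multiplicity p n" for n
  define m where "m n = n div p ^ k n" for n
  have dec: "n = p ^ k n * m n" "m n > 0" "\<not> p dvd m n" if "n \<in> F" for n
  proof -
    have "n > 0" using that insert by auto
    show "n = p ^ k n * m n" unfolding k_def m_def using multiplicity_dvd[of p n] by simp
    then show "m n > 0" using \<open>n > 0\<close> by (metis gr0I mult_0_right)
    show "\<not> p dvd m n" unfolding m_def k_def using \<open>n > 0\<close> p by (intro multiplicity_decompose) auto
  qed
  define h where "h n = (k n, m n)" for n
  have inj: "inj_on h F"
  proof (rule inj_onI)
    fix a b assume "a \<in> F" "b \<in> F" "h a = h b"
    then show "a = b" using dec[of a] dec[of b] by (auto simp: h_def)
  qed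
  define M where "M = m ` F"
  define K where "K = Max (k ` F)"
  define g where "g x = ((if fst x > 0 then t else 1) / real p ^ fst x) * (t ^ omega (snd x) / real (snd x))" for x
  have Mprops: "\<forall>b\<in>M. b > 0 \<and> prime_factors b \<subseteq> P"
  proof
    fix b assume "b \<in> M"
    then obtain n where n: "n \<in> F" "b = m n" by (auto simp: M_def)
    have "prime_factors b \<subseteq> prime_factors n - {p}"
      using omega_pk(2)[OF p dec(2,3)[OF n(1)], of "k n"] dec(1)[OF n(1)] n by simp
    then show "b > 0 \<and> prime_factors b \<subseteq> P" using insert n dec(2)[OF n(1)] by auto
  qed
  have IH: "(\<Sum>b\<in>M. t ^ omega b / real b) \<le> (\<Prod>p\<in>P. 1 + t / (real p - 1))"
    using insert.IH[of M] insert Mprops by (auto simp: M_def)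
  have "(\<Sum>n\<in>F. t ^ omega n / real n) = (\<Sum>n\<in>F. g (h n))"
  proof (rule sum.cong)
    fix n assume n: "n \<in> F"
    have "t ^ omega n / real n = t ^ omega (p ^ k n * m n) / real (p ^ k n * m n)"
      using dec(1)[OF n] by simp
    also have "\<dots> = g (h n)"
      unfolding omega_pk(1)[OF p dec(2,3)[OF n]] g_def h_def
      by (simp add: power_add field_simps)
    finally show "t ^ omega n / real n = g (h n)" .
  qed simp
  also have "\<dots> = (\<Sum>x\<in>h ` F. g x)" using inj by (simp add: sum.reindex)
  also have "\<dots> \<le> (\<Sum>x\<in>{..K} \<times> M. g x)"
  proof (rule sum_mono2)
    show "finite ({..K} \<times> M)" using insert by (auto simp: M_def)
    show "h ` F \<subseteq> {..K} \<times> M"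
    proof
      fix x assume "x \<in> h ` F"
      then obtain n where n: "n \<in> F" "x = h n" by blast
      have "k n \<le> K" unfolding K_def using n insert.prems(2) by (intro Max_ge) auto
      then show "x \<in> {..K} \<times> M" using n by (simp add: h_def M_def)
    qed
    show "\<And>b. b \<in> {..K} \<times> M - h ` F \<Longrightarrow> 0 \<le> g b"
      using t by (auto simp: g_def)
  qed
  also have "\<dots> = (\<Sum>a\<le>K. (if a > 0 then t else 1) / real p ^ a) * (\<Sum>b\<in>M. t ^ omega b / real b)"
    unfolding sum_product sum.cartesian_product g_def by (simp add: case_prod_beta)
  also have "\<dots> \<le> (1 + t / (real p - 1)) * (\<Prod>p\<in>P. 1 + t / (real p - 1))"
  proof (rule mult_mono)
    show "(\<Sum>a\<le>K. (if a > 0 then t else 1) / real p ^ a) \<le> 1 + t / (real p - 1)"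
      using geom_bound[OF t, of p K] prime_ge_2_nat[OF p] by simp
    show "0 \<le> 1 + t / (real p - 1)" using t prime_ge_2_nat[OF p] by simp
    show "0 \<le> (\<Sum>b\<in>M. t ^ omega b / real b)" using t by (intro sum_nonneg) auto
  qed (rule IH)
  also have "\<dots> = (\<Prod>p\<in>insert p P. 1 + t / (real p - 1))"
    using insert by simp
  finally show ?case .
qed

lemma telescope:
  "(\<Sum>n\<in>{2..Suc M}. 1 / (real n - 1) - 1 / real n) = 1 - 1 / real (Suc M)"
proof (induction M)
  case 0 then show ?case by simp
next
  case (Suc M)
  have eq: "{2..Suc (Suc M)} = insert (Suc (Suc M)) {2..Suc M}" by auto
  have "(\<Sum>n\<in>{2..Suc (Suc M)}. 1 / (real n - 1) - 1 / real n)
     = (1 / (real (Suc (Suc M)) - 1) - 1 / real (Suc (Suc M))) + (\<Sum>n\<in>{2..Suc M}. 1 / (real n - 1) - 1 / real n)"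
    unfolding eq by (rule sum.insert) auto
  also have "\<dots> = 1 - 1 / real (Suc (Suc M))"
  proof -
    have e: "real (Suc (Suc M)) - 1 = real (Suc M)" by simp
    show ?thesis unfolding Suc.IH e by linarith
  qed
  finally show ?case .
qed

lemma recip_sub:
  assumes "finite P" "\<forall>p\<in>P. prime (p::nat)"
  shows "(\<Sum>p\<in>P. 1 / (real p - 1)) \<le> (\<Sum>p\<in>P. 1 / real p) + 1"
proof -
  define M where "M = Max (insert 2 P)"
  have M: "M \<ge> 2" using assms by (simp add: M_def)
  have sub: "P \<subseteq> {2..Suc (M - 1)}"
  proof
    fix p assume "p \<in> P"
    then have "p \<le> M" "p \<ge> 2" using assms prime_ge_2_nat by (auto simp: M_def)
    then show "p \<in> {2..Suc (M - 1)}" by auto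
  qed
  have "(\<Sum>p\<in>P. 1 / (real p - 1) - 1 / real p) \<le> (\<Sum>n\<in>{2..Suc (M - 1)}. 1 / (real n - 1) - 1 / real n)"
  proof (rule sum_mono2)
    fix n assume "n \<in> {2..Suc (M - 1)} - P"
    then have "real n \<ge> 2" by auto
    then show "0 \<le> 1 / (real n - 1) - 1 / real n" by (simp add: field_simps)
  qed (use sub in auto)
  also have "\<dots> \<le> 1" unfolding telescope by simp
  finally show ?thesis by (simp add: sum_subtractf)
qed

theorem lemma5p2:
  fixes C \<eta> :: real
  assumes "\<eta> \<ge> 1"
  shows "\<exists>K::real. \<forall>(S::nat set) (\<beta>::real) (z::real).
           (\<forall>p\<in>S. prime p) \<longrightarrow> z > exp 1 \<longrightarrow>
           (\<Sum>p\<in>S_le S z. 1 / real p) \<le> \<beta> * ln (ln z) + C \<longrightarrow>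
           ((\<lambda>n. 1 / real n) summable_on
              {n \<in> N_le S z. real (omega n) \<ge> \<eta> * \<beta> * ln (ln z)}) \<and>
           (\<Sum>\<^sub>\<infinity>n\<in>{n \<in> N_le S z. real (omega n) \<ge> \<eta> * \<beta> * ln (ln z)}. 1 / real n)
             \<le> K * (ln z) powr (\<beta> * (\<eta> - \<eta> * ln \<eta>))"
proof (intro exI allI impI)
  fix S :: "nat set" and \<beta> z :: real
  assume S: "\<forall>p\<in>S. prime p" and z: "z > exp 1"
    and sumS: "(\<Sum>p\<in>S_le S z. 1 / real p) \<le> \<beta> * ln (ln z) + C"
  define L where "L = ln (ln z)"
  have z0: "z > 0" using z by (meson exp_gt_zero less_trans)
  have lnz: "ln z > 1" using z z0 by (metis ln_exp ln_less_cancel_iff exp_gt_zero)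
  have L: "L > 0" unfolding L_def using lnz by simp
  define P where "P = S_le S z"
  have finP: "finite P"
  proof (rule finite_subset)
    show "P \<subseteq> {..nat \<lfloor>z\<rfloor>}"
      by (auto simp: P_def S_le_def le_nat_floor)
  qed simp
  have primeP: "\<forall>p\<in>P. prime p" using S by (auto simp: P_def S_le_def)
  define A where "A = {n \<in> N_le S z. real (omega n) \<ge> \<eta> * \<beta> * ln (ln z)}"
  define B where "B = \<eta> powr (-(\<eta> * \<beta> * L)) * (\<Prod>p\<in>P. 1 + \<eta> / (real p - 1))"
  have eta0: "\<eta> > 0" using assms by simp
  have fin: "(\<Sum>n\<in>F. 1 / real n) \<le> B" if F: "finite F" "F \<subseteq> A" for F
  proof -
    have "(\<Sum>n\<in>F. 1 / real n) \<le> (\<Sum>n\<in>F. \<eta> powr (-(\<eta> * \<beta> * L)) * (\<eta> ^ omega n / real n))"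
    proof (rule sum_mono)
      fix n assume n: "n \<in> F"
      then have om: "real (omega n) - \<eta> * \<beta> * L \<ge> 0" using F by (auto simp: A_def L_def)
      have "1 \<le> \<eta> powr (real (omega n) - \<eta> * \<beta> * L)"
        using assms om by (simp add: ge_one_powr_ge_zero)
      also have "\<dots> = \<eta> powr (-(\<eta> * \<beta> * L)) * \<eta> ^ omega n"
        using eta0 by (simp add: powr_diff powr_minus powr_realpow divide_inverse)
      finally have "1 \<le> \<eta> powr (-(\<eta> * \<beta> * L)) * \<eta> ^ omega n" .
      then show "1 / real n \<le> \<eta> powr (-(\<eta> * \<beta> * L)) * (\<eta> ^ omega n / real n)"
        by (simp add: divide_right_mono)
    qed
    also have "\<dots> = \<eta> powr (-(\<eta> * \<beta> * L)) * (\<Sum>n\<in>F. \<eta> ^ omega n / real n)"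
      by (simp add: sum_distrib_left)
    also have "\<dots> \<le> B" unfolding B_def
    proof (rule mult_left_mono)
      show "(\<Sum>n\<in>F. \<eta> ^ omega n / real n) \<le> (\<Prod>p\<in>P. 1 + \<eta> / (real p - 1))"
        using key[of \<eta> P F] eta0 finP primeP F by (auto simp: A_def N_le_def P_def)
    qed simp
    finally show ?thesis .
  qed
  have summ: "(\<lambda>n. 1 / real n) summable_on A"
    by (rule nonneg_bdd_above_summable_on) (auto intro!: bdd_aboveI2[where M = B] fin)
  have inf: "(\<Sum>\<^sub>\<infinity>n\<in>A. 1 / real n) \<le> B"
    by (rule infsum_le_finite_sums[OF summ fin])
  have "(\<Prod>p\<in>P. 1 + \<eta> / (real p - 1)) \<le> (\<Prod>p\<in>P. exp (\<eta> / (real p - 1)))"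
  proof (rule prod_mono)
    fix p assume "p \<in> P"
    then have "real p \<ge> 2" using primeP prime_ge_2_nat by force
    then have "0 \<le> \<eta> / (real p - 1)" using eta0 by simp
    then show "0 \<le> 1 + \<eta> / (real p - 1) \<and> 1 + \<eta> / (real p - 1) \<le> exp (\<eta> / (real p - 1))"
      by (auto intro: exp_ge_add_one_self[simplified add.commute])
  qed
  also have "\<dots> = exp (\<eta> * (\<Sum>p\<in>P. 1 / (real p - 1)))"
    using finP by (simp add: exp_sum sum_distrib_left)
  also have "\<dots> \<le> exp (\<eta> * (\<beta> * L + C + 1))"
    using recip_sub[OF finP primeP] sumS eta0 by (simp add: P_def L_def)
  finally have pb: "(\<Prod>p\<in>P. 1 + \<eta> / (real p - 1)) \<le> exp (\<eta> * (\<beta> * L + C + 1))" .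
  have "B \<le> \<eta> powr (-(\<eta> * \<beta> * L)) * exp (\<eta> * (\<beta> * L + C + 1))"
    unfolding B_def by (rule mult_left_mono[OF pb]) simp
  also have "\<dots> = exp (\<eta> * (C + 1)) * (ln z) powr (\<beta> * (\<eta> - \<eta> * ln \<eta>))"
    using eta0 lnz by (simp add: powr_def L_def exp_add[symmetric] algebra_simps)
  finally show "((\<lambda>n. 1 / real n) summable_on
              {n \<in> N_le S z. real (omega n) \<ge> \<eta> * \<beta> * ln (ln z)}) \<and>
           (\<Sum>\<^sub>\<infinity>n\<in>{n \<in> N_le S z. real (omega n) \<ge> \<eta> * \<beta> * ln (ln z)}. 1 / real n)
             \<le> exp (\<eta> * (C + 1)) * (ln z) powr (\<beta> * (\<eta> - \<eta> * ln \<eta>))"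
    using summ inf unfolding A_def by simp
qed

end
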